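(* Fix $\gamma\in\mathbb R$ and $\alpha>1$. Suppose $(\log n)^2\ll k\ll\sqrt n$ and $m=\frac{k^2n}{4\log n}\big(1+\frac{\gamma}{\sqrt{\log n}}\big)$ (rounded to an integer). Then $$t^*=\mathbb E_1[d_{v_*}]+\frac{\gamma}{\sqrt2}\,\sigma+o(\sigma),$$ where $d_{v_*}$ is the degree of the planted hub vertex under $\mathbb P_1$.
   Context: Let $n,m,k$ be positive integers and $N=\binom n2$; all asymptotics are as $n\to\infty$ with $k=k(n)$, $m=m(n)$, and $a\ll b$ means $a/b\to0$. The planted distribution $\mathbb P_1$ is the law of the random graph obtained as follows: choose a hub vertex $v_*\in[n]$ uniformly at random; choose a uniformly random set $S$ of $k$ of the $n-1$ possible edges incident to $v_*$; then choose a uniformly random set of $m-k$ edges among the $N-k$ possible edges not in $S$; the graph consists of these $m$ edges. Let $p=m/N$ and $\sigma^2=(n-1)p(1-p)\frac{N}{N-1}\cdot\frac{N-(n-1)}{N-1}$ (the variance of a vertex degree in $G(n,m)$). For a fixed $\alpha>0$, the threshold is $$t^*=\frac{2m}{n}+\sqrt{\frac{2m}{n}\Big(1-\frac mN\Big)}\sqrt{2\log n-\frac1\alpha\log\log n}.$$ *)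

theory Defs
  imports "HOL-Probability.Probability" "HOL-Library.Landau_Symbols"
begin

definition all_edges :: "nat \<Rightarrow> nat set set" where
  "all_edges n = {e. \<exists>i j. i < n \<and> j < n \<and> i \<noteq> j \<and> e = {i, j}}"

definition incident_edges :: "nat \<Rightarrow> nat \<Rightarrow> nat set set" where
  "incident_edges n v = {e \<in> all_edges n. v \<in> e}"

definition degree :: "nat set set \<Rightarrow> nat \<Rightarrow> nat" where
  "degree G v = card {e \<in> G. v \<in> e}"

definition planted :: "nat \<Rightarrow> nat \<Rightarrow> nat \<Rightarrow> (nat \<times> nat set set) pmf" where
  "planted n m k =
     bind_pmf (pmf_of_set {..<n}) (\<lambda>v.
     bind_pmf (pmf_of_set {S. S \<subseteq> incident_edges n v \<and> card S = k}) (\<lambda>S.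
     bind_pmf (pmf_of_set {T. T \<subseteq> all_edges n - S \<and> card T = m - k}) (\<lambda>T.
     return_pmf (v, S \<union> T))))"

definition hub_degree_mean :: "nat \<Rightarrow> nat \<Rightarrow> nat \<Rightarrow> real" where
  "hub_degree_mean n m k =
     measure_pmf.expectation (planted n m k) (\<lambda>(v, G). real (degree G v))"

definition NN :: "nat \<Rightarrow> real" where
  "NN n = real (n choose 2)"

definition sigma_deg :: "nat \<Rightarrow> nat \<Rightarrow> real" where
  "sigma_deg n m =
     (let N = NN n; p = real m / N in
      sqrt ((real n - 1) * p * (1 - p) * (N / (N - 1)) * ((N - (real n - 1)) / (N - 1))))"

definition tstar :: "real \<Rightarrow> nat \<Rightarrow> nat \<Rightarrow> real" where
  "tstar \<alpha> n m =
     2 * real m / real n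
     + sqrt (2 * real m / real n * (1 - real m / NN n))
       * sqrt (2 * ln (real n) - (1 / \<alpha>) * ln (ln (real n)))"

end

theory Submission
  imports Defs "HOL-Real_Asymp.Real_Asymp"
begin


lemma all_edges_eq: "all_edges n = {e. e \<subseteq> {..<n} \<and> card e = 2}"
  unfolding all_edges_def by (auto simp: card_2_iff)

lemma finite_all_edges: "finite (all_edges n)"
  unfolding all_edges_eq by (rule finite_subset[of _ "Pow {..<n}"]) auto

lemma card_all_edges: "card (all_edges n) = n choose 2"
  unfolding all_edges_eq using n_subsets[of "{..<n}" 2] by simp

lemma incident_eq: "v < n \<Longrightarrow> incident_edges n v = (\<lambda>j. {v, j}) ` ({..<n} - {v})"
  unfolding incident_edges_def all_edges_def by auto

lemma card_incident: "v < n \<Longrightarrow> card (incident_edges n v) = n - 1"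
proof -
  assume v: "v < n"
  have "inj_on (\<lambda>j. {v, j}) ({..<n} - {v})" by (auto simp: inj_on_def doubleton_eq_iff)
  then show ?thesis using v by (simp add: incident_eq card_image)
qed

lemma incident_sub: "incident_edges n v \<subseteq> all_edges n"
  unfolding incident_edges_def by auto

lemma card_subsets_containing:
  assumes "finite A" "e \<in> A" "r \<ge> 1"
  shows "card {T. (T \<subseteq> A \<and> card T = r) \<and> e \<in> T} = (card A - 1) choose (r - 1)"
proof -
  have eq: "{T. (T \<subseteq> A \<and> card T = r) \<and> e \<in> T} = insert e ` {U. U \<subseteq> A - {e} \<and> card U = r - 1}"
  proof (rule set_eqI, rule iffI)
    fix T assume T: "T \<in> {T. (T \<subseteq> A \<and> card T = r) \<and> e \<in> T}"
    then have "finite T" using assms finite_subset by blast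
    then have "T - {e} \<in> {U. U \<subseteq> A - {e} \<and> card U = r - 1}" using T by auto
    moreover have "T = insert e (T - {e})" using T by auto
    ultimately show "T \<in> insert e ` {U. U \<subseteq> A - {e} \<and> card U = r - 1}" by blast
  next
    fix T assume "T \<in> insert e ` {U. U \<subseteq> A - {e} \<and> card U = r - 1}"
    then obtain U where U: "U \<subseteq> A - {e}" "card U = r - 1" "T = insert e U" by auto
    have "finite U" using U assms finite_subset by blast
    have "e \<notin> U" using U by auto
    then have "card T = r" using U \<open>finite U\<close> assms by simp
    then show "T \<in> {T. (T \<subseteq> A \<and> card T = r) \<and> e \<in> T}" using U assms by auto
  qed
  have inj: "inj_on (insert e) {U. U \<subseteq> A - {e} \<and> card U = r - 1}"
    by (auto simp: inj_on_def)
  show ?thesis unfolding eq using inj assms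
    by (simp add: card_image n_subsets)
qed

lemma exp_card_inter:
  assumes A: "finite A" and B: "B \<subseteq> A" and r: "r \<le> card A"
  shows "measure_pmf.expectation (pmf_of_set {T. T \<subseteq> A \<and> card T = r}) (\<lambda>T. real (card (T \<inter> B)))
         = real r * real (card B) / real (card A)"
proof -
  define F where "F = {T. T \<subseteq> A \<and> card T = r}"
  have finF: "finite F" unfolding F_def using A by simp
  have neF: "F \<noteq> {}" unfolding F_def using obtain_subset_with_card_n[OF r] by blast
  have cardF: "card F = card A choose r" unfolding F_def using n_subsets[OF A] by simp
  have finB: "finite B" using A B finite_subset by blast
  have "(\<Sum>T\<in>F. real (card (T \<inter> B))) = (\<Sum>T\<in>F. \<Sum>e\<in>B. (if e \<in> T then 1 else 0::real))"
    by (intro sum.cong refl) (simp add: sum.If_cases finB Int_commute)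
  also have "\<dots> = (\<Sum>e\<in>B. \<Sum>T\<in>F. (if e \<in> T then 1 else 0::real))" by (rule sum.swap)
  also have "\<dots> = (\<Sum>e\<in>B. real (card {T\<in>F. e \<in> T}))"
    by (intro sum.cong refl) (simp add: sum.If_cases finF Collect_conj_eq Int_commute)
  finally have S: "(\<Sum>T\<in>F. real (card (T \<inter> B))) = (\<Sum>e\<in>B. real (card {T\<in>F. e \<in> T}))" .
  show ?thesis
  proof (cases "r = 0")
    case True
    then have "\<And>T. T \<in> F \<Longrightarrow> T = {}" unfolding F_def using A finite_subset by fastforce
    then have "(\<Sum>T\<in>F. real (card (T \<inter> B))) = 0" by (intro sum.neutral) force
    then show ?thesis using True integral_pmf_of_set[OF neF finF, of "\<lambda>T. real (card (T \<inter> B))"]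
      unfolding F_def by simp
  next
    case False
    then have "card A \<ge> 1" using r by simp
    have "\<And>e. e \<in> B \<Longrightarrow> card {T\<in>F. e \<in> T} = (card A - 1) choose (r - 1)"
      unfolding F_def using card_subsets_containing[OF A] B False by auto
    then have "(\<Sum>T\<in>F. real (card (T \<inter> B))) = real (card B) * real ((card A - 1) choose (r - 1))"
      using S by simp
    moreover have "real r * real (card A choose r) = real (card A) * real ((card A - 1) choose (r - 1))"
      using times_binomial_minus1_eq[of r "card A"] False by (metis of_nat_mult gr0I)
    moreover have "real (card A choose r) > 0" using r by simp
    moreover have "real (card A) > 0" using \<open>card A \<ge> 1\<close> by simp
    ultimately show ?thesis
      by (simp add: integral_pmf_of_set[OF neF finF] F_def[symmetric] cardF field_simps)
  qed
qed

lemma exp_bind_const: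
  assumes "A \<noteq> {}" "finite A" "\<And>x. x \<in> A \<Longrightarrow> finite (set_pmf (f x))"
    "\<And>x. x \<in> A \<Longrightarrow> measure_pmf.expectation (f x) h = (c::real)"
  shows "measure_pmf.expectation (pmf_of_set A \<bind> f) h = c"
  using assms by (simp add: pmf_expectation_bind_pmf_of_set)

lemma hub_mean:
  assumes n: "1 \<le> n" and kn: "k \<le> n - 1" and km: "k \<le> m" and mN: "m \<le> n choose 2"
  shows "hub_degree_mean n m k
     = real k + (real m - real k) * (real n - 1 - real k) / (real (n choose 2) - real k)"
proof -
  define c where "c = real k + (real m - real k) * (real n - 1 - real k) / (real (n choose 2) - real k)"
  have inner: "measure_pmf.expectation (pmf_of_set {T. T \<subseteq> all_edges n - S \<and> card T = m - k})
        (\<lambda>T. real (degree (S \<union> T) v)) = c"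
    if v: "v < n" and S: "S \<subseteq> incident_edges n v" "card S = k" for v S
  proof -
    define A where "A = all_edges n - S"
    define B where "B = incident_edges n v - S"
    define Ts where "Ts = {T. T \<subseteq> A \<and> card T = m - k}"
    have finA: "finite A" unfolding A_def using finite_all_edges by simp
    have Sall: "S \<subseteq> all_edges n" using S incident_sub by blast
    have finS: "finite S" using Sall finite_all_edges finite_subset by blast
    have cardA: "card A = (n choose 2) - k" unfolding A_def
      using card_Diff_subset[OF finS Sall] card_all_edges S by simp
    have cardB: "card B = n - 1 - k" unfolding B_def
      using card_Diff_subset[OF finS S(1)] card_incident[OF v] S by simp
    have BA: "B \<subseteq> A" unfolding A_def B_def using incident_sub by blast
    have r: "m - k \<le> card A" using cardA mN km by simp
    have finTs: "finite Ts" unfolding Ts_def using finA by simp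
    have neTs: "Ts \<noteq> {}" unfolding Ts_def using obtain_subset_with_card_n[OF r] by blast
    have deg: "real (degree (S \<union> T) v) = real k + real (card (T \<inter> B))" if T: "T \<in> Ts" for T
    proof -
      have TA: "T \<subseteq> A" using T unfolding Ts_def by simp
      have finT: "finite T" using TA finA finite_subset by blast
      have "{e \<in> S \<union> T. v \<in> e} = S \<union> (T \<inter> B)"
        using S(1) TA unfolding A_def B_def incident_edges_def by blast
      moreover have "S \<inter> (T \<inter> B) = {}" unfolding B_def by blast
      ultimately have "degree (S \<union> T) v = card S + card (T \<inter> B)"
        unfolding degree_def using finS finT by (simp add: card_Un_disjoint)
      then show ?thesis using S by simp
    qed
    have "measure_pmf.expectation (pmf_of_set Ts) (\<lambda>T. real (degree (S \<union> T) v))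
        = (\<Sum>T\<in>Ts. real k + real (card (T \<inter> B))) / real (card Ts)"
      using deg by (simp add: integral_pmf_of_set[OF neTs finTs])
    also have "\<dots> = real k + (\<Sum>T\<in>Ts. real (card (T \<inter> B))) / real (card Ts)"
      using finTs neTs by (simp add: sum.distrib field_simps)
    also have "(\<Sum>T\<in>Ts. real (card (T \<inter> B))) / real (card Ts)
        = measure_pmf.expectation (pmf_of_set Ts) (\<lambda>T. real (card (T \<inter> B)))"
      by (simp add: integral_pmf_of_set[OF neTs finTs])
    also have "\<dots> = real (m - k) * real (card B) / real (card A)"
      unfolding Ts_def by (rule exp_card_inter[OF finA BA r])
    also have "real k + real (m - k) * real (card B) / real (card A) = c"
      unfolding c_def cardA cardB using km kn mN n by (simp add: of_nat_diff Suc_le_eq)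
    finally show ?thesis unfolding Ts_def A_def .
  qed
  show ?thesis
    unfolding c_def[symmetric] hub_degree_mean_def planted_def
  proof (rule exp_bind_const)
    have "0 \<in> {..<n}" using n by simp
    then show "{..<n} \<noteq> {}" by blast
    show "finite {..<n}" by simp
  next
    fix v assume "v \<in> {..<n}"
    then have v: "v < n" by simp
    define Ss where "Ss = {S. S \<subseteq> incident_edges n v \<and> card S = k}"
    have finI: "finite (incident_edges n v)" using incident_sub finite_all_edges finite_subset by blast
    have finSs: "finite Ss" unfolding Ss_def using finI by simp
    have neSs: "Ss \<noteq> {}" unfolding Ss_def using obtain_subset_with_card_n[of k "incident_edges n v"]
      card_incident[OF v] kn by auto
    have finT: "finite (set_pmf (pmf_of_set {T. T \<subseteq> all_edges n - S \<and> card T = m - k} \<bind>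
              (\<lambda>T. return_pmf (v, S \<union> T))))" if "S \<in> Ss" for S
    proof -
      have S: "S \<subseteq> incident_edges n v" "card S = k" using that unfolding Ss_def by auto
      have Sall: "S \<subseteq> all_edges n" using S incident_sub by blast
      have finS: "finite S" using Sall finite_all_edges finite_subset by blast
      have cardA: "card (all_edges n - S) = (n choose 2) - k"
        using card_Diff_subset[OF finS Sall] card_all_edges S by simp
      have r: "m - k \<le> card (all_edges n - S)" using cardA mN km by simp
      have ne: "{T. T \<subseteq> all_edges n - S \<and> card T = m - k} \<noteq> {}"
        using obtain_subset_with_card_n[OF r] by blast
      have fin: "finite {T. T \<subseteq> all_edges n - S \<and> card T = m - k}" using finite_all_edges by simp
      show ?thesis using set_pmf_of_set[OF ne fin] fin by simp
    qed
    show "finite (set_pmf (pmf_of_set {S. S \<subseteq> incident_edges n v \<and> card S = k} \<bind>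
          (\<lambda>S. pmf_of_set {T. T \<subseteq> all_edges n - S \<and> card T = m - k} \<bind>
                (\<lambda>T. return_pmf (v, S \<union> T)))))"
      unfolding Ss_def[symmetric] set_bind_pmf[of "pmf_of_set Ss"] set_pmf_of_set[OF neSs finSs]
      by (rule finite_UN_I[OF finSs finT])
    show "measure_pmf.expectation (pmf_of_set {S. S \<subseteq> incident_edges n v \<and> card S = k} \<bind>
          (\<lambda>S. pmf_of_set {T. T \<subseteq> all_edges n - S \<and> card T = m - k} \<bind>
                (\<lambda>T. return_pmf (v, S \<union> T)))) (\<lambda>(v, G). real (degree G v)) = c"
      unfolding Ss_def[symmetric]
    proof (rule exp_bind_const[OF neSs finSs])
      fix S assume "S \<in> Ss"
      then have S: "S \<subseteq> incident_edges n v" "card S = k" unfolding Ss_def by auto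
      show "finite (set_pmf (pmf_of_set {T. T \<subseteq> all_edges n - S \<and> card T = m - k} \<bind>
              (\<lambda>T. return_pmf (v, S \<union> T))))" by (rule finT) fact
      show "measure_pmf.expectation (pmf_of_set {T. T \<subseteq> all_edges n - S \<and> card T = m - k} \<bind>
              (\<lambda>T. return_pmf (v, S \<union> T))) (\<lambda>(v, G). real (degree G v)) = c"
        using inner[OF v S] by (simp add: map_pmf_def[symmetric])
    qed
  qed
qed



lemma NN_eq: "NN n = real n * (real n - 1) / 2"
proof -
  have "2 * (n choose 2) = n * (n - 1)"
    by (metis Suc_1 binomial_absorption choose_one)
  then have "2 * real (n choose 2) = real n * (real n - 1)"
  proof (cases "n = 0")
    case False
    have "real (2 * (n choose 2)) = real (n * (n - 1))" using \<open>2 * (n choose 2) = n * (n - 1)\<close> by (simp only:)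
    then show ?thesis using False by (simp add: of_nat_diff)
  qed simp
  then show ?thesis unfolding NN_def by simp
qed

lemma ev_facts:
  "eventually (\<lambda>n::nat. ln (real n) \<ge> 1 \<and> real n \<ge> 3 \<and> sqrt (real n) \<le> real n - 1
     \<and> real n - 1 \<le> (real n * (real n - 1) / 2) / 2
     \<and> real n / (8 * ln (real n)) \<ge> 2
     \<and> 3 * real n ^ 2 / (8 * ln (real n)) + 1 / 2 \<le> real n * (real n - 1) / 2) at_top"
  by (intro eventually_conj; real_asymp)

lemma B_alg:
  fixes a N K M :: real
  assumes "K \<noteq> 0" "N \<noteq> 0" "N - K \<noteq> 0"
  shows "(a * M / N - (M - K) * (a - K) / (N - K)) / K = M * (N - a) / (N * (N - K)) + (a - K) / (N - K)"
proof -
  have "a * M / N - (M - K) * (a - K) / (N - K) = K * (M * (N - a) + N * (a - K)) / (N * (N - K))"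
    using assms by (simp add: divide_simps) (simp add: algebra_simps)
  then show ?thesis using assms by (simp add: divide_simps)
qed

lemma B_bound1:
  fixes a N K M :: real
  assumes "0 \<le> K" "K \<le> a" "2 * a \<le> N" "0 \<le> M" "0 < N" "a \<le> N"
  shows "0 \<le> M * (N - a) / (N * (N - K)) \<and> M * (N - a) / (N * (N - K)) \<le> 2 * (M / N)"
proof -
  have NK: "N - K \<ge> N / 2" using assms by simp
  have pos: "N * (N - K) > 0" using assms by (intro mult_pos_pos) auto
  have "M * (N - a) \<le> M * (2 * (N - K))" using assms by (intro mult_left_mono) auto
  then have "M * (N - a) / (N * (N - K)) \<le> M * (2 * (N - K)) / (N * (N - K))"
    using pos by (simp add: divide_right_mono)
  also have "\<dots> = 2 * M / N" using pos assms NK by (simp add: divide_simps)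
  finally have "M * (N - a) / (N * (N - K)) \<le> 2 * M / N" .
  moreover have "0 \<le> M * (N - a) / (N * (N - K))" using pos assms by simp
  ultimately show ?thesis by simp
qed

lemma B_bound2:
  fixes a N K :: real
  assumes "0 \<le> K" "K \<le> a" "2 * a \<le> N" "0 < N"
  shows "0 \<le> (a - K) / (N - K) \<and> (a - K) / (N - K) \<le> 2 * (a / N)"
proof -
  have NK: "N - K > 0" using assms by simp
  have "0 \<le> a * (N - 2 * K)" "0 \<le> K * N" using assms by auto
  then have "(a - K) * N \<le> 2 * a * (N - K)" by (simp add: algebra_simps)
  then have "(a - K) / (N - K) \<le> 2 * a / N" using NK assms by (simp add: divide_simps)
  moreover have "0 \<le> (a - K) / (N - K)" using NK assms by simp
  ultimately show ?thesis by simp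
qed

lemma alg1:
  fixes s K n g N :: real
  assumes "s > 0" "n > 0" "N > 0"
  shows "s * (K\<^sup>2 * n / (4 * (s * s)) * (1 + g)) / N = K\<^sup>2 / n * (1 + g) * (n ^ 2 / (4 * s * N))"
  using assms by (simp add: field_simps power2_eq_square)

lemma alg2:
  fixes M n L K g p :: real
  assumes "n \<noteq> 0" "L \<noteq> 0" "K \<noteq> 0" "1 + g \<noteq> 0"
  shows "2 * M / n * (1 - p) * (2 * L) / K\<^sup>2 = M / (K\<^sup>2 * n / (4 * L) * (1 + g)) * (1 + g) * (1 - p)"
proof -
  have d: "K\<^sup>2 * n / (4 * L) * (1 + g) \<noteq> 0" using assms by simp
  have "M / (K\<^sup>2 * n / (4 * L) * (1 + g)) * (1 + g) = 4 * L * M / (K\<^sup>2 * n)"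
    using assms d by (simp add: divide_simps)
  moreover have "2 * M / n * (1 - p) * (2 * L) / K\<^sup>2 = 4 * L * M / (K\<^sup>2 * n) * (1 - p)"
    using assms by (simp add: divide_simps)
  ultimately show ?thesis by simp
qed

lemma alg4:
  fixes A C D :: real
  shows "(A / 2) * (C / 2) / ((D / 2)^2) = A * C / D^2"
  by (simp add: power_divide)

lemma alg3:
  fixes s x g p :: real
  shows "s * (x * (1 + g) * (1 - p) - 1) = (s * (x - 1)) * (1 + g) * (1 - p) + s * g - s * p - (s * g) * p"
  by (simp add: algebra_simps)

theorem mainTheorem7:
  fixes \<gamma> \<alpha> :: real and k m :: "nat \<Rightarrow> nat"
  assumes "\<alpha> > 1"
    and "(\<lambda>n. (ln (real n))\<^sup>2) \<in> o(\<lambda>n. real (k n))"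
    and "(\<lambda>n. real (k n)) \<in> o(\<lambda>n. sqrt (real n))"
    and "\<And>n. m n = nat (round ((real (k n))\<^sup>2 * real n / (4 * ln (real n))
                               * (1 + \<gamma> / sqrt (ln (real n)))))"
  shows "(\<lambda>n. tstar \<alpha> n (m n) - hub_degree_mean n (m n) (k n)
              - \<gamma> / sqrt 2 * sigma_deg n (m n))
         \<in> o(\<lambda>n. sigma_deg n (m n))"
proof -
  note a1 = assms(1) and a2 = assms(2) and a3 = assms(3) and a4 = assms(4)
  define L where "L = (\<lambda>n::nat. ln (real n))"
  define K where "K = (\<lambda>n. real (k n))"
  define g where "g = (\<lambda>n. \<gamma> / sqrt (L n))"
  define X where "X = (\<lambda>n. (K n)\<^sup>2 * real n / (4 * L n) * (1 + g n))"
  define M where "M = (\<lambda>n. real (m n))"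
  define Nr where "Nr = (\<lambda>n::nat. real n * (real n - 1) / 2)"
  define p where "p = (\<lambda>n. M n / Nr n)"
  define s0 where "s0 = (\<lambda>n. K n / sqrt (2 * L n))"
  define R where "R = (\<lambda>n. 2 * M n / real n * (1 - p n) * (2 * L n) / (K n)\<^sup>2)"
  define Q where "Q = (\<lambda>n. Nr n * (Nr n - real n + 1) / (Nr n - 1)\<^sup>2)"
  define u where "u = (\<lambda>n. sqrt (1 - ln (L n) / (2 * \<alpha> * L n)))"
  define E1 where "E1 = (\<lambda>n. hub_degree_mean n (m n) (k n))"
  define B where "B = (\<lambda>n. 2 * M n / real n + K n - E1 n)"

  have g0: "g \<longlonglongrightarrow> 0" unfolding g_def L_def by real_asymp
  have ev_g: "eventually (\<lambda>n. \<bar>g n\<bar> < 1/2) sequentially"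
    using order_tendstoD(2)[OF tendsto_rabs[OF g0], of "1/2"] by simp
  have ev_K: "eventually (\<lambda>n. (L n)\<^sup>2 \<le> K n) sequentially"
    using landau_o.smallD[OF a2 zero_less_one] unfolding L_def K_def by eventually_elim auto
  have ev_K2: "eventually (\<lambda>n. K n \<le> sqrt (real n)) sequentially"
    using landau_o.smallD[OF a3 zero_less_one] unfolding K_def by eventually_elim auto
  define G where "G = (\<lambda>n. L n \<ge> 1 \<and> real n \<ge> 3 \<and> sqrt (real n) \<le> real n - 1
     \<and> real n - 1 \<le> Nr n / 2 \<and> real n / (8 * L n) \<ge> 2
     \<and> 3 * real n ^ 2 / (8 * L n) + 1/2 \<le> Nr n \<and> \<bar>g n\<bar> < 1/2 \<and> (L n)\<^sup>2 \<le> K n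
     \<and> K n \<le> sqrt (real n))"
  have evG: "eventually G sequentially"
    using ev_facts ev_g ev_K ev_K2 unfolding G_def L_def Nr_def by eventually_elim auto

  have basic: "K n \<ge> 1 \<and> X n > 0 \<and> X n \<ge> (K n)\<^sup>2 * real n / (8 * L n) \<and> \<bar>M n - X n\<bar> \<le> 1/2
      \<and> M n \<ge> 0 \<and> K n \<le> M n \<and> M n \<le> Nr n \<and> K n \<le> real n - 1" if "G n" for n
  proof -
    have G: "L n \<ge> 1" "real n \<ge> 3" "sqrt (real n) \<le> real n - 1"
     "real n - 1 \<le> Nr n / 2" "real n / (8 * L n) \<ge> 2"
     "3 * real n ^ 2 / (8 * L n) + 1/2 \<le> Nr n" "\<bar>g n\<bar> < 1/2" "(L n)\<^sup>2 \<le> K n"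
     "K n \<le> sqrt (real n)" using that unfolding G_def by auto
    have L2: "(L n)\<^sup>2 \<ge> 1" using G(1) by (simp add: one_le_power)
    have K1: "K n \<ge> 1" using L2 G(8) by linarith
    have Lpos: "L n > 0" using G(1) by linarith
    have g1: "1 + g n \<ge> 1/2" "1 + g n \<le> 3/2" using G(7) by auto
    define Y where "Y = (K n)\<^sup>2 * real n / (4 * L n)"
    have Ypos: "Y > 0" unfolding Y_def using K1 G(2) Lpos by simp
    have XY: "X n = Y * (1 + g n)" unfolding X_def Y_def by simp
    have Xlow: "X n \<ge> Y / 2" unfolding XY using Ypos g1 by (simp add: mult_left_mono[of "1/2" "1 + g n" Y, simplified] mult.commute)
    have Xpos: "X n > 0" using Xlow Ypos by linarith
    have Y2: "Y / 2 = (K n)\<^sup>2 * real n / (8 * L n)" unfolding Y_def by simp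
    have mn: "m n = nat (round (X n))" using a4[of n] unfolding X_def g_def K_def L_def by simp
    have r0: "round (X n) \<ge> 0" using Xpos round_mono[of 0 "X n"] by simp
    have MX: "M n = of_int (round (X n))" unfolding M_def mn using r0 by simp
    have MXd: "\<bar>M n - X n\<bar> \<le> 1/2" unfolding MX by (rule of_int_round_abs_le)
    have M0: "M n \<ge> 0" unfolding M_def by simp
    have "Y / 2 = (K n)\<^sup>2 * (real n / (8 * L n))" unfolding Y2 by simp
    also have "\<dots> \<ge> (K n)\<^sup>2 * 2" using G(5) by (intro mult_left_mono) auto
    finally have "Y / 2 \<ge> 2 * (K n)\<^sup>2" by simp
    moreover have "(K n)\<^sup>2 \<ge> K n" using K1 by (simp add: power2_eq_square)
    ultimately have KM: "K n \<le> M n" using Xlow MXd K1 by linarith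
    have K0: "K n \<ge> 0" using K1 by simp
    have Ksq: "(K n)\<^sup>2 \<le> real n" using G(9) K0
      by (metis of_nat_0_le_iff power_mono real_sqrt_pow2)
    have "X n \<le> Y * (3/2)" unfolding XY using Ypos g1 by (intro mult_left_mono) auto
    also have "Y \<le> real n * real n / (4 * L n)" unfolding Y_def using Ksq Lpos
      by (intro divide_right_mono mult_right_mono) auto
    then have "Y * (3/2) \<le> 3 * real n ^ 2 / (8 * L n)" by (simp add: power2_eq_square)
    finally have "X n \<le> 3 * real n ^ 2 / (8 * L n)" .
    then have MN: "M n \<le> Nr n" using G(6) MXd by linarith
    have Kn: "K n \<le> real n - 1" using G(3) G(9) by linarith
    show ?thesis using K1 Xpos Xlow Y2 MXd M0 KM MN Kn by simp
  qed
  have hub: "E1 n = K n + (M n - K n) * (real n - 1 - K n) / (Nr n - K n)" if "G n" for n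
  proof -
    have b: "K n \<le> M n" "M n \<le> Nr n" "K n \<le> real n - 1" using basic[OF that] by auto
    have n3: "real n \<ge> 3" using that unfolding G_def by auto
    have NC: "real (n choose 2) = Nr n" using NN_eq[of n] unfolding NN_def Nr_def by simp
    have "real (k n) \<le> real (n - 1)" using b(3) n3 unfolding K_def by (simp add: of_nat_diff)
    then have c1: "k n \<le> n - 1" by (simp only: of_nat_le_iff)
    have c2: "k n \<le> m n" using b(1) unfolding K_def M_def by (simp only: of_nat_le_iff)
    have "real (m n) \<le> real (n choose 2)" using b(2) NC unfolding M_def by simp
    then have c3: "m n \<le> n choose 2" by (simp only: of_nat_le_iff)
    have c0: "1 \<le> n" using n3 by simp
    show ?thesis unfolding E1_def using hub_mean[OF c0 c1 c2 c3] NC unfolding K_def M_def by simp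
  qed
  have Lpos: "L n > 0" if "G n" for n using that unfolding G_def by auto
  have sLpos: "sqrt (L n) > 0" if "G n" for n using Lpos[OF that] by simp
  have n3: "real n \<ge> 3" if "G n" for n using that unfolding G_def by auto
  have Nrpos: "Nr n > 0" if "G n" for n using n3[OF that] unfolding Nr_def by simp
  have T1: "(\<lambda>n. (K n)\<^sup>2 / real n) \<longlonglongrightarrow> 0"
  proof -
    have "(\<lambda>n. K n / sqrt (real n)) \<longlonglongrightarrow> 0" using smalloD_tendsto[OF a3] unfolding K_def by simp
    then have "(\<lambda>n. (K n / sqrt (real n))^2) \<longlonglongrightarrow> 0" using tendsto_power[of _ 0 _ 2] by fastforce
    moreover have "eventually (\<lambda>n. (K n / sqrt (real n))^2 = (K n)\<^sup>2 / real n) sequentially"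
      by (simp add: power_divide)
    ultimately show ?thesis using tendsto_cong by fastforce
  qed
  have T2: "(\<lambda>n. sqrt (L n) * p n) \<longlonglongrightarrow> 0"
  proof (rule Lim_null_comparison)
    define w where "w = (\<lambda>n::nat. real n ^ 2 / (4 * sqrt (ln (real n)) * (real n * (real n - 1) / 2)))"
    define v where "v = (\<lambda>n::nat. sqrt (ln (real n)) / (real n * (real n - 1) / 2))"
    have w0: "w \<longlonglongrightarrow> 0" unfolding w_def by real_asymp
    have v0: "v \<longlonglongrightarrow> 0" unfolding v_def by real_asymp
    have "(\<lambda>n. (K n)\<^sup>2 / real n * (1 + g n) * w n + v n / 2) \<longlonglongrightarrow> 0 * (1 + 0) * 0 + 0 / 2"
      by (intro tendsto_intros T1 g0 w0 v0) auto
    then show "(\<lambda>n. (K n)\<^sup>2 / real n * (1 + g n) * w n + v n / 2) \<longlonglongrightarrow> 0" by simp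
    show "eventually (\<lambda>n. norm (sqrt (L n) * p n) \<le> (K n)\<^sup>2 / real n * (1 + g n) * w n + v n / 2) sequentially"
      using evG
    proof eventually_elim
      case (elim n)
      have b: "\<bar>M n - X n\<bar> \<le> 1/2" "M n \<ge> 0" using basic[OF elim] by auto
      have Lp: "L n > 0" "sqrt (L n) > 0" using Lpos[OF elim] sLpos[OF elim] by auto
      have Np: "Nr n > 0" using Nrpos[OF elim] .
      have n0: "real n > 0" using n3[OF elim] by simp
      have MX: "M n \<le> X n + 1/2" using b(1) abs_ge_self[of "M n - X n"] by linarith
      have "norm (sqrt (L n) * p n) = sqrt (L n) * M n / Nr n" unfolding p_def using b Lp Np by simp
      also have "sqrt (L n) * M n / Nr n \<le> sqrt (L n) * (X n + 1/2) / Nr n"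
        using MX Lp Np by (intro divide_right_mono mult_left_mono) auto
      also have "\<dots> = sqrt (L n) * X n / Nr n + sqrt (L n) / Nr n / 2" using Np by (simp add: field_simps)
      also have "sqrt (L n) * X n / Nr n = (K n)\<^sup>2 / real n * (1 + g n) * w n"
      proof -
        have sL: "sqrt (L n) * sqrt (L n) = L n" using Lp by simp
        have "w n = real n ^ 2 / (4 * sqrt (L n) * Nr n)" unfolding w_def L_def Nr_def by simp
        moreover have "sqrt (L n) * ((K n)\<^sup>2 * real n / (4 * (sqrt (L n) * sqrt (L n))) * (1 + g n)) / Nr n
          = (K n)\<^sup>2 / real n * (1 + g n) * (real n ^ 2 / (4 * sqrt (L n) * Nr n))"
          using alg1[of "sqrt (L n)" "real n" "Nr n" "K n" "g n"] Lp Np n0 by simp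
        ultimately show ?thesis unfolding X_def sL by simp
      qed
      also have "sqrt (L n) / Nr n = v n" unfolding v_def L_def Nr_def by simp
      finally show ?case by simp
    qed
  qed
  have sL0: "(\<lambda>n. 1 / sqrt (L n)) \<longlonglongrightarrow> 0" unfolding L_def by real_asymp
  have T3: "p \<longlonglongrightarrow> 0"
  proof -
    have "(\<lambda>n. sqrt (L n) * p n * (1 / sqrt (L n))) \<longlonglongrightarrow> 0 * 0" by (intro tendsto_intros T2 sL0)
    moreover have "eventually (\<lambda>n. sqrt (L n) * p n * (1 / sqrt (L n)) = p n) sequentially"
      using evG by eventually_elim (frule sLpos, simp)
    ultimately show ?thesis using tendsto_cong by fastforce
  qed
  have T4: "(\<lambda>n. sqrt (L n) * (M n / X n - 1)) \<longlonglongrightarrow> 0"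
  proof (rule Lim_null_comparison)
    show "(\<lambda>n. 4 * L n * sqrt (L n) / real n) \<longlonglongrightarrow> 0" unfolding L_def by real_asymp
    show "eventually (\<lambda>n. norm (sqrt (L n) * (M n / X n - 1)) \<le> 4 * L n * sqrt (L n) / real n) sequentially"
      using evG
    proof eventually_elim
      case (elim n)
      have b: "\<bar>M n - X n\<bar> \<le> 1/2" "X n > 0" "X n \<ge> (K n)\<^sup>2 * real n / (8 * L n)" "K n \<ge> 1"
        using basic[OF elim] by auto
      have Lp: "L n > 0" "sqrt (L n) > 0" using Lpos[OF elim] sLpos[OF elim] by auto
      have n0: "real n > 0" using n3[OF elim] by simp
      have "(K n)\<^sup>2 \<ge> 1" using b(4) by (simp add: one_le_power)
      then have "(K n)\<^sup>2 * real n / (8 * L n) \<ge> real n / (8 * L n)"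
        using Lp n0 by (intro divide_right_mono) (auto simp: mult_le_cancel_right1)
      then have Xl: "X n \<ge> real n / (8 * L n)" using b(3) by linarith
      have e1: "sqrt (L n) * (M n / X n - 1) = sqrt (L n) * (M n - X n) / X n"
        using b by (simp add: field_simps)
      have "norm (sqrt (L n) * (M n / X n - 1)) = sqrt (L n) * \<bar>M n - X n\<bar> / X n"
        unfolding e1 real_norm_def abs_divide abs_mult using b Lp by simp
      also have "\<dots> \<le> sqrt (L n) * (1/2) / X n"
        using b Lp by (intro divide_right_mono mult_left_mono) auto
      also have "\<dots> \<le> sqrt (L n) * (1/2) / (real n / (8 * L n))"
        using b Lp n0 Xl by (intro divide_left_mono) auto
      also have "\<dots> = 4 * L n * sqrt (L n) / real n" using Lp n0 by (simp add: field_simps)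
      finally show ?case .
    qed
  qed
  have T6: "(\<lambda>n. sqrt (L n) * (R n - 1)) \<longlonglongrightarrow> \<gamma>"
  proof -
    have "(\<lambda>n. (sqrt (L n) * (M n / X n - 1)) * (1 + g n) * (1 - p n) + \<gamma> - sqrt (L n) * p n - \<gamma> * p n)
       \<longlonglongrightarrow> 0 * (1 + 0) * (1 - 0) + \<gamma> - 0 - \<gamma> * 0"
      by (intro tendsto_intros T4 g0 T3 T2)
    moreover have "eventually (\<lambda>n. (sqrt (L n) * (M n / X n - 1)) * (1 + g n) * (1 - p n) + \<gamma> - sqrt (L n) * p n - \<gamma> * p n
        = sqrt (L n) * (R n - 1)) sequentially"
      using evG
    proof eventually_elim
      case (elim n)
      have b: "K n \<ge> 1" using basic[OF elim] by auto
      have Lp: "L n > 0" "sqrt (L n) > 0" using Lpos[OF elim] sLpos[OF elim] by auto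
      have n0: "real n > 0" using n3[OF elim] by simp
      have g1: "1 + g n \<noteq> 0" using elim unfolding G_def by auto
      have R: "R n = M n / X n * (1 + g n) * (1 - p n)"
        unfolding R_def X_def using alg2[of "real n" "L n" "K n" "g n" "M n" "p n"] b Lp n0 g1 by simp
      have sg: "sqrt (L n) * g n = \<gamma>" unfolding g_def using Lp by simp
      show ?case unfolding R alg3 sg by simp
    qed
    ultimately show ?thesis using tendsto_cong by fastforce
  qed
  have T7: "R \<longlonglongrightarrow> 1"
  proof -
    have "(\<lambda>n. 1 + sqrt (L n) * (R n - 1) * (1 / sqrt (L n))) \<longlonglongrightarrow> 1 + \<gamma> * 0"
      by (intro tendsto_intros T6 sL0)
    moreover have "eventually (\<lambda>n. 1 + sqrt (L n) * (R n - 1) * (1 / sqrt (L n)) = R n) sequentially"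
      using evG by eventually_elim (frule sLpos, simp)
    ultimately show ?thesis using tendsto_cong by fastforce
  qed
  have evR: "eventually (\<lambda>n. R n > 0) sequentially"
    using order_tendstoD(1)[OF T7, of 0] by simp
  have T8: "(\<lambda>n. sqrt (L n) * (sqrt (R n) - 1)) \<longlonglongrightarrow> \<gamma> / 2"
  proof -
    have "(\<lambda>n. sqrt (L n) * (R n - 1) / (sqrt (R n) + 1)) \<longlonglongrightarrow> \<gamma> / (sqrt 1 + 1)"
      by (intro tendsto_intros T6 T7) auto
    moreover have "eventually (\<lambda>n. sqrt (L n) * (R n - 1) / (sqrt (R n) + 1) = sqrt (L n) * (sqrt (R n) - 1)) sequentially"
      using evR
    proof eventually_elim
      case (elim n)
      have "R n - 1 = (sqrt (R n) - 1) * (sqrt (R n) + 1)" using elim by (simp add: algebra_simps)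
      moreover have "sqrt (R n) + 1 > 0" using real_sqrt_gt_zero[OF elim] by linarith
      ultimately show ?case by simp
    qed
    ultimately show ?thesis using tendsto_cong by fastforce
  qed
  have T9a: "u \<longlonglongrightarrow> 1" unfolding u_def L_def using a1 by real_asymp
  have T9b: "(\<lambda>n. sqrt (L n) * (u n - 1)) \<longlonglongrightarrow> 0" unfolding u_def L_def using a1 by real_asymp
  have T10: "Q \<longlonglongrightarrow> 1"
  proof -
    have "(\<lambda>n::nat. (real n * (real n - 1)) * (real n * (real n - 1) - 2 * real n + 2) / (real n * (real n - 1) - 2)^2) \<longlonglongrightarrow> 1"
      by real_asymp
    moreover have "(\<lambda>n::nat. (real n * (real n - 1)) * (real n * (real n - 1) - 2 * real n + 2) / (real n * (real n - 1) - 2)^2) = Q"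
    proof (rule ext)
      fix n
      have e1: "Nr n - 1 = (real n * (real n - 1) - 2) / 2" and e2: "Nr n - real n + 1 = (real n * (real n - 1) - 2 * real n + 2) / 2"
        unfolding Nr_def by (simp_all add: field_simps)
      have e3: "Nr n = (real n * (real n - 1)) / 2" unfolding Nr_def by simp
      show "(real n * (real n - 1)) * (real n * (real n - 1) - 2 * real n + 2) / (real n * (real n - 1) - 2)^2 = Q n"
        unfolding Q_def by (simp only: e1 e2) (simp only: e3 alg4)
    qed
    ultimately show ?thesis by simp
  qed
  have s0pos: "s0 n > 0" if "G n" for n
    using basic[OF that] Lpos[OF that] unfolding s0_def by simp
  have Nr_n: "2 * M n / real n = (real n - 1) * M n / Nr n" if "G n" for n
    using n3[OF that] unfolding Nr_def by (simp add: field_simps)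
  have T11: "(\<lambda>n. B n / s0 n) \<longlonglongrightarrow> 0"
  proof (rule Lim_null_comparison)
    have v0: "(\<lambda>n. sqrt (L n) * (real n - 1) / Nr n) \<longlonglongrightarrow> 0" unfolding L_def Nr_def by real_asymp
    have "(\<lambda>n. 2 * sqrt 2 * (sqrt (L n) * p n + sqrt (L n) * (real n - 1) / Nr n)) \<longlonglongrightarrow> 2 * sqrt 2 * (0 + 0)"
      by (intro tendsto_intros T2 v0)
    then show "(\<lambda>n. 2 * sqrt 2 * (sqrt (L n) * p n + sqrt (L n) * (real n - 1) / Nr n)) \<longlonglongrightarrow> 0" by simp
    show "eventually (\<lambda>n. norm (B n / s0 n) \<le> 2 * sqrt 2 * (sqrt (L n) * p n + sqrt (L n) * (real n - 1) / Nr n)) sequentially"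
      using evG
    proof eventually_elim
      case (elim n)
      have b: "K n \<ge> 1" "M n \<ge> 0" "K n \<le> real n - 1" using basic[OF elim] by auto
      have G: "real n - 1 \<le> Nr n / 2" using elim unfolding G_def by auto
      have Lp: "L n > 0" "sqrt (L n) > 0" using Lpos[OF elim] sLpos[OF elim] by auto
      have Np: "Nr n > 0" using Nrpos[OF elim] .
      have NK: "Nr n - K n \<noteq> 0" using b G by linarith
      have "B n = (real n - 1) * M n / Nr n - (M n - K n) * (real n - 1 - K n) / (Nr n - K n)"
        unfolding B_def hub[OF elim] Nr_n[OF elim] by simp
      then have BK: "B n / K n = M n * (Nr n - (real n - 1)) / (Nr n * (Nr n - K n)) + (real n - 1 - K n) / (Nr n - K n)"
        using B_alg[of "K n" "Nr n" "real n - 1" "M n"] b NK Np by simp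
      have bd1: "0 \<le> M n * (Nr n - (real n - 1)) / (Nr n * (Nr n - K n)) \<and> M n * (Nr n - (real n - 1)) / (Nr n * (Nr n - K n)) \<le> 2 * p n"
        using B_bound1[of "K n" "real n - 1" "Nr n" "M n"] b G Np unfolding p_def by simp
      have bd2: "0 \<le> (real n - 1 - K n) / (Nr n - K n) \<and> (real n - 1 - K n) / (Nr n - K n) \<le> 2 * ((real n - 1) / Nr n)"
        using B_bound2[of "K n" "real n - 1" "Nr n"] b G Np by simp
      have BK0: "0 \<le> B n / K n" "B n / K n \<le> 2 * p n + 2 * ((real n - 1) / Nr n)" using BK bd1 bd2 by linarith+
      have eqB: "B n / s0 n = sqrt 2 * sqrt (L n) * (B n / K n)"
        unfolding s0_def using b Lp by (simp add: real_sqrt_mult field_simps)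
      have nn: "0 \<le> sqrt 2 * sqrt (L n) * (B n / K n)" using BK0(1) Lp by (intro mult_nonneg_nonneg) auto
      have "norm (B n / s0 n) = sqrt 2 * sqrt (L n) * (B n / K n)"
        unfolding real_norm_def eqB using nn by (rule abs_of_nonneg)
      also have "\<dots> \<le> sqrt 2 * sqrt (L n) * (2 * p n + 2 * ((real n - 1) / Nr n))"
        using BK0 Lp by (intro mult_left_mono) auto
      also have "\<dots> = 2 * sqrt 2 * (sqrt (L n) * p n + sqrt (L n) * (real n - 1) / Nr n)"
        by (simp add: algebra_simps)
      finally show ?case .
    qed
  qed
  have D4: "tstar \<alpha> n (m n) = 2 * M n / real n + K n * sqrt (R n) * u n" if "G n" for n
  proof -
    have b: "K n \<ge> 1" using basic[OF that] by auto
    have Lp: "L n > 0" using Lpos[OF that] by auto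
    have ap: "\<alpha> > 0" using a1 by simp
    define A where "A = 2 * M n / real n * (1 - p n)"
    have AR: "A * (2 * L n) = (K n)\<^sup>2 * R n" unfolding A_def R_def using b by simp
    have lnL: "2 * L n - 1 / \<alpha> * ln (L n) = 2 * L n * (1 - ln (L n) / (2 * \<alpha> * L n))"
      using Lp ap by (simp add: field_simps)
    have "sqrt A * sqrt (2 * L n - 1 / \<alpha> * ln (L n)) = sqrt (A * (2 * L n) * (1 - ln (L n) / (2 * \<alpha> * L n)))"
      unfolding lnL by (simp add: real_sqrt_mult mult.assoc)
    also have "\<dots> = K n * sqrt (R n) * u n" unfolding AR u_def using b by (simp add: real_sqrt_mult)
    finally have "sqrt A * sqrt (2 * L n - 1 / \<alpha> * ln (L n)) = K n * sqrt (R n) * u n" .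
    moreover have "NN n = Nr n" unfolding NN_eq Nr_def by simp
    ultimately show ?thesis unfolding tstar_def A_def p_def M_def L_def by simp
  qed
  have D5: "sigma_deg n (m n) = s0 n * sqrt (R n) * sqrt (Q n)" if "G n" for n
  proof -
    have b: "K n \<ge> 1" using basic[OF that] by auto
    have Lp: "L n > 0" using Lpos[OF that] by auto
    have n0: "real n \<ge> 3" using n3[OF that] .
    have NNe: "NN n = Nr n" unfolding NN_eq Nr_def by simp
    have s2: "(s0 n)\<^sup>2 = (K n)\<^sup>2 / (2 * L n)" unfolding s0_def using Lp by (simp add: power_divide)
    have e1: "(s0 n)\<^sup>2 * R n = 2 * M n / real n * (1 - p n)" unfolding s2 R_def using b Lp n0 by (simp add: field_simps)
    have e2: "(real n - 1) * (M n / Nr n) = 2 * M n / real n" unfolding Nr_def using n0 by (simp add: field_simps)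
    have e3: "Nr n / (Nr n - 1) * ((Nr n - (real n - 1)) / (Nr n - 1)) = Q n" unfolding Q_def
      by (simp add: power2_eq_square algebra_simps)
    have "(real n - 1) * (M n / Nr n) * (1 - M n / Nr n) * (Nr n / (Nr n - 1)) * ((Nr n - (real n - 1)) / (Nr n - 1))
        = ((real n - 1) * (M n / Nr n)) * (1 - p n) * (Nr n / (Nr n - 1) * ((Nr n - (real n - 1)) / (Nr n - 1)))"
      by (simp only: p_def mult.assoc)
    also have "\<dots> = (s0 n)\<^sup>2 * R n * Q n" unfolding e2 e3 e1 by simp
    finally have arg: "(real n - 1) * (M n / Nr n) * (1 - M n / Nr n) * (Nr n / (Nr n - 1)) * ((Nr n - (real n - 1)) / (Nr n - 1))
        = (s0 n)\<^sup>2 * R n * Q n" .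
    have "sqrt ((s0 n)\<^sup>2 * R n * Q n) = s0 n * sqrt (R n) * sqrt (Q n)"
      using s0pos[OF that] by (simp add: real_sqrt_mult)
    then show ?thesis unfolding sigma_deg_def Let_def NNe M_def[symmetric] arg[unfolded M_def] by simp
  qed
  define F where "F = (\<lambda>n. sqrt 2 * ((sqrt (L n) * (sqrt (R n) - 1)) * u n + sqrt (L n) * (u n - 1))
      + B n / s0 n - \<gamma> / sqrt 2 * (sqrt (R n) * sqrt (Q n)))"
  define f where "f = (\<lambda>n. tstar \<alpha> n (m n) - hub_degree_mean n (m n) (k n) - \<gamma> / sqrt 2 * sigma_deg n (m n))"
  have FL: "F \<longlonglongrightarrow> sqrt 2 * ((\<gamma> / 2) * 1 + 0) + 0 - \<gamma> / sqrt 2 * (sqrt 1 * sqrt 1)"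
    unfolding F_def by (intro tendsto_intros T8 T9a T9b T11 T7 T10)
  have z: "sqrt 2 * ((\<gamma> / 2) * 1 + 0) + 0 - \<gamma> / sqrt 2 * (sqrt 1 * sqrt 1) = 0"
  proof -
    have "sqrt 2 * sqrt 2 = (2::real)" by simp
    then show ?thesis by (simp add: field_simps)
  qed
  have evQ: "eventually (\<lambda>n. Q n > 0) sequentially"
    using order_tendstoD(1)[OF T10, of 0] by simp
  have lim: "(\<lambda>n. F n / (sqrt (R n) * sqrt (Q n))) \<longlonglongrightarrow> 0 / (sqrt 1 * sqrt 1)"
    using FL z by (intro tendsto_intros T7 T10) auto
  have ev2: "eventually (\<lambda>n. F n / (sqrt (R n) * sqrt (Q n)) = f n / sigma_deg n (m n)
       \<and> sigma_deg n (m n) \<noteq> 0) sequentially"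
    using evG evR evQ
  proof eventually_elim
    case (elim n)
    have b: "K n \<ge> 1" using basic[OF elim(1)] by auto
    have Lp: "L n > 0" using Lpos[OF elim(1)] by auto
    have sp: "s0 n > 0" using s0pos[OF elim(1)] .
    have Ks: "K n = s0 n * (sqrt 2 * sqrt (L n))"
      unfolding s0_def using Lp by (simp add: real_sqrt_mult)
    have fn: "f n = s0 n * F n"
    proof -
      have "f n = K n * (sqrt (R n) * u n - 1) + B n - \<gamma> / sqrt 2 * (s0 n * sqrt (R n) * sqrt (Q n))"
        unfolding f_def D4[OF elim(1)] D5[OF elim(1)] B_def E1_def by (simp add: algebra_simps)
      also have "\<dots> = s0 n * F n" unfolding F_def Ks using sp by (simp add: algebra_simps)
      finally show ?thesis .
    qed
    have sg: "sigma_deg n (m n) = s0 n * (sqrt (R n) * sqrt (Q n))" using D5[OF elim(1)] by simp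
    have pos: "sqrt (R n) * sqrt (Q n) > 0" using elim by simp
    show ?case unfolding fn sg using sp pos elim(2,3) by simp
  qed
  have "(\<lambda>n. f n / sigma_deg n (m n)) \<longlonglongrightarrow> 0"
  proof -
    have "eventually (\<lambda>n. F n / (sqrt (R n) * sqrt (Q n)) = f n / sigma_deg n (m n)) sequentially"
      using ev2 by eventually_elim simp
    then show ?thesis using lim tendsto_cong by fastforce
  qed
  moreover have "eventually (\<lambda>n. sigma_deg n (m n) \<noteq> 0) sequentially"
    using ev2 by eventually_elim simp
  ultimately have "f \<in> o(\<lambda>n. sigma_deg n (m n))" by (rule smalloI_tendsto)
  then show ?thesis unfolding f_def .
qed

end
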